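(* Let $\alpha\in(0,1)$ and $k\in\mathbb{Z}\setminus\{0\}$. Then $\Psi_{\alpha,k}(x)=\sqrt{\frac{2|k|}{\pi(1+\alpha)^3}}\,\|\Phi_{\alpha,k}\|^2_{L^2(\mathbb{R}^+)}\,x^{1+\alpha/2}+o(x^{3/2})$ as $x\downarrow0$.
   Context: On $\mathbb{R}^+$: $\Phi_{\alpha,k}(x)=\sqrt{\frac{\pi(1+\alpha)}{2|k|}}x^{-\alpha/2}e^{-\frac{|k|}{1+\alpha}x^{1+\alpha}}$, $F_{\alpha,k}(x)=\sqrt{\frac{2(1+\alpha)}{\pi|k|}}x^{-\alpha/2}\sinh\big(\frac{|k|}{1+\alpha}x^{1+\alpha}\big)$, and $\Psi_{\alpha,k}(x)=\frac{1}{1+\alpha}\Big(\Phi_{\alpha,k}(x)\int_0^xF_{\alpha,k}(\rho)\Phi_{\alpha,k}(\rho)\mathrm{d}\rho+F_{\alpha,k}(x)\int_x^\infty\Phi_{\alpha,k}(\rho)^2\mathrm{d}\rho\Big)$. *)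

theory Defs
  imports "HOL-Analysis.Analysis" "HOL-Library.Landau_Symbols"
begin

definition Phi :: "real \<Rightarrow> int \<Rightarrow> real \<Rightarrow> real" where
  "Phi \<alpha> k x = sqrt (pi * (1 + \<alpha>) / (2 * \<bar>real_of_int k\<bar>)) * x powr (-\<alpha>/2)
      * exp (- (\<bar>real_of_int k\<bar> / (1 + \<alpha>)) * x powr (1 + \<alpha>))"

definition F :: "real \<Rightarrow> int \<Rightarrow> real \<Rightarrow> real" where
  "F \<alpha> k x = sqrt (2 * (1 + \<alpha>) / (pi * \<bar>real_of_int k\<bar>)) * x powr (-\<alpha>/2)
      * sinh ((\<bar>real_of_int k\<bar> / (1 + \<alpha>)) * x powr (1 + \<alpha>))"

definition Psi :: "real \<Rightarrow> int \<Rightarrow> real \<Rightarrow> real" where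
  "Psi \<alpha> k x = (1 / (1 + \<alpha>)) *
     (Phi \<alpha> k x * (LBINT \<rho>:{0<..<x}. F \<alpha> k \<rho> * Phi \<alpha> k \<rho>)
      + F \<alpha> k x * (LBINT \<rho>:{x<..}. (Phi \<alpha> k \<rho>)\<^sup>2))"

end

theory Submission imports Defs "HOL-Real_Asymp.Real_Asymp" begin


lemma powr_int:
  fixes b c :: real
  assumes "b > -1" "c \<ge> 0"
  shows "set_integrable lborel {0<..c} (\<lambda>t. t powr b)"
    "(LBINT t:{0<..c}. t powr b) = c powr (b+1) / (b+1)"
proof -
  have hi: "((\<lambda>x. x powr b) has_integral (c powr (b+1) / (b+1))) {0..c}"
    by (rule has_integral_powr_from_0) (use assms in auto)
  have hi': "((\<lambda>x. x powr b) has_integral (c powr (b+1) / (b+1))) {0<..c}"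
    using hi by (subst (asm) has_integral_spike_set_eq[where T="{0<..c}"]) (auto intro!: negligible_subset[OF negligible_empty])
  have "(\<lambda>x. x powr b) absolutely_integrable_on {0<..c}"
    by (rule nonnegative_absolutely_integrable_1) (use hi' in auto)
  then show si: "set_integrable lborel {0<..c} (\<lambda>t. t powr b)"
    unfolding set_integrable_def
    by (subst (asm) integrable_completion) (auto simp: set_integrable_def)
  show "(LBINT t:{0<..c}. t powr b) = c powr (b+1) / (b+1)"
    using set_borel_integral_eq_integral(2)[OF si] hi' by (simp add: integral_unique)
qed

lemma exp_int:
  fixes a :: real
  assumes "a > 0"
  shows "set_integrable lborel {1<..} (\<lambda>t. exp (-a*t))"
proof -
  have "(\<lambda>t. exp (-a*t)) integrable_on {1..}"
    by (rule integrable_on_exp_minus_to_infinity) (use assms in auto)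
  then have "(\<lambda>t. exp (-a*t)) absolutely_integrable_on {1..}"
    by (intro nonnegative_absolutely_integrable_1) auto
  then have "set_integrable lborel {1..} (\<lambda>t. exp (-a*t))"
    unfolding set_integrable_def
    by (subst (asm) integrable_completion) (auto simp: set_integrable_def)
  then show ?thesis by (rule set_integrable_subset) auto
qed

lemma asy1: "0<a \<Longrightarrow> a<1 \<Longrightarrow> 0<K \<Longrightarrow> (\<lambda>x::real. x powr (-a/2) * (sinh (K * x powr (1+a)) - K * x powr (1+a))) \<in> o[at_right 0](\<lambda>x. x powr (3/2))"
  by real_asymp
lemma asy2: "0<a \<Longrightarrow> a<1 \<Longrightarrow> 0<K \<Longrightarrow> (\<lambda>x::real. x powr (-a/2) * exp (-K * x powr (1+a)) * x^2) \<in> o[at_right 0](\<lambda>x. x powr (3/2))"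
  by real_asymp
lemma asy3: "0<a \<Longrightarrow> a<1 \<Longrightarrow> 0<K \<Longrightarrow> (\<lambda>x::real. x powr (-a/2) * sinh (K * x powr (1+a)) * x powr (1-a)) \<in> o[at_right 0](\<lambda>x. x powr (3/2))"
  by real_asymp

lemma sinh_exp_bd:
  fixes t :: real assumes "t \<ge> 0"
  shows "0 \<le> sinh t * exp (-t)" "sinh t * exp (-t) \<le> t"
proof -
  have e1: "exp (-t) \<le> 1" using assms by simp
  have e2: "1 - t \<le> exp (-t)" using exp_ge_add_one_self[of "-t"] by simp
  have e0: "exp (-t) > 0" by simp
  have eq: "sinh t * exp (-t) = (1 - exp (-t) * exp (-t)) / 2"
    by (simp add: sinh_def field_simps flip: exp_add)
  show "0 \<le> sinh t * exp (-t)" unfolding eq using e1 e0 by (simp add: mult_le_one)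
  have "(1 - exp (-t)) * (1 + exp (-t)) \<le> t * 2"
    using e1 e2 e0 by (intro mult_mono) auto
  then show "sinh t * exp (-t) \<le> t" unfolding eq by (simp add: algebra_simps)
qed

theorem lemma3p7:
  fixes \<alpha> :: real and k :: int
  assumes "0 < \<alpha>" and "\<alpha> < 1" and "k \<noteq> 0"
  shows "(\<lambda>x. Psi \<alpha> k x
            - sqrt (2 * \<bar>real_of_int k\<bar> / (pi * (1 + \<alpha>) ^ 3))
              * (LBINT \<rho>:{0<..}. (Phi \<alpha> k \<rho>)\<^sup>2) * x powr (1 + \<alpha>/2))
         \<in> o[at_right (0::real)](\<lambda>x. x powr (3/2))"
proof -
  define a where "a = 1 + \<alpha>"
  define K where "K = \<bar>real_of_int k\<bar> / a"
  define c1 where "c1 = sqrt (pi * a / (2 * \<bar>real_of_int k\<bar>))"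
  define c2 where "c2 = sqrt (2 * a / (pi * \<bar>real_of_int k\<bar>))"
  have kpos: "\<bar>real_of_int k\<bar> > 0" using assms by simp
  have a_pos: "a > 0" "a \<ge> 1" using assms by (auto simp: a_def)
  have K_pos: "K > 0" using kpos a_pos by (simp add: K_def)
  have c1_pos: "c1 \<ge> 0" and c2_pos: "c2 \<ge> 0" using kpos a_pos by (auto simp: c1_def c2_def)
  have c1sq: "c1^2 = pi * a / (2 * \<bar>real_of_int k\<bar>)" using kpos a_pos by (simp add: c1_def)
  have Phi_eq: "Phi \<alpha> k x = c1 * x powr (-\<alpha>/2) * exp (-K * x powr a)" for x
    unfolding Phi_def c1_def K_def a_def by simp
  have F_eq: "F \<alpha> k x = c2 * x powr (-\<alpha>/2) * sinh (K * x powr a)" for x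
    unfolding F_def c2_def K_def a_def by simp
  have Phi2: "(Phi \<alpha> k x)^2 = c1^2 * x powr (-\<alpha>) * exp (-(2*K) * x powr a)" if "x > 0" for x
  proof -
    have "(x powr (-\<alpha>/2))^2 = x powr (-\<alpha>)"
      by (simp add: power2_eq_square flip: powr_add)
    moreover have "(exp (-K * x powr a))^2 = exp (-(2*K) * x powr a)"
      by (simp add: power2_eq_square flip: exp_add)
    ultimately show ?thesis by (simp add: Phi_eq power_mult_distrib)
  qed
  have xa: "x powr (-\<alpha>) * x powr a = x" if "x > 0" for x
    using that by (simp add: a_def flip: powr_add)
  have FPhi: "F \<alpha> k x * Phi \<alpha> k x = c1*c2 * x powr (-\<alpha>) * (sinh (K*x powr a) * exp (-K*x powr a))"
    if "x > 0" for x
  proof -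
    have "(x powr (-\<alpha>/2)) * (x powr (-\<alpha>/2)) = x powr (-\<alpha>)"
      by (simp flip: powr_add)
    then show ?thesis by (simp add: Phi_eq F_eq algebra_simps)
  qed
  have FPhi_bd: "0 \<le> F \<alpha> k x * Phi \<alpha> k x \<and> F \<alpha> k x * Phi \<alpha> k x \<le> c1*c2*K * x" if "x > 0" for x
  proof -
    have t: "K * x powr a \<ge> 0" using K_pos by simp
    have "c1*c2 * x powr (-\<alpha>) * (sinh (K*x powr a) * exp (-K*x powr a)) \<le> c1*c2 * x powr (-\<alpha>) * (K * x powr a)"
      using sinh_exp_bd(2)[OF t] c1_pos c2_pos by (intro mult_left_mono) auto
    also have "\<dots> = c1*c2*K*x" using xa[OF that] by (simp add: algebra_simps)
    finally show ?thesis using FPhi[OF that] sinh_exp_bd(1)[OF t] c1_pos c2_pos by simp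
  qed
  have Phi2_bd1: "(Phi \<alpha> k x)^2 \<le> c1^2 * x powr (-\<alpha>)" if "x > 0" for x
  proof -
    have "exp (-(2*K) * x powr a) \<le> 1" using K_pos by simp
    then show ?thesis unfolding Phi2[OF that] by (intro mult_left_le) auto
  qed
  have Phi2_bd2: "(Phi \<alpha> k x)^2 \<le> c1^2 * exp (-(2*K) * x)" if "x > 1" for x
  proof -
    have "x powr \<alpha> \<ge> 1" using that assms by (intro ge_one_powr_ge_zero) auto
    then have p1: "x powr (-\<alpha>) \<le> 1" by (simp add: powr_minus inverse_le_1_iff)
    have "x powr a \<ge> x powr 1" using that a_pos by (intro powr_mono) auto
    then have "x powr a \<ge> x" using that by simp
    then have p2: "exp (-(2*K) * x powr a) \<le> exp (-(2*K) * x)" using K_pos by simp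
    have "c1^2 * x powr (-\<alpha>) * exp (-(2*K) * x powr a) \<le> c1^2 * 1 * exp (-(2*K) * x)"
      using p1 p2 by (intro mult_mono) auto
    then show ?thesis using Phi2 that by simp
  qed
  have mb[measurable]: "(\<lambda>x. (Phi \<alpha> k x)^2) \<in> borel_measurable borel"
    unfolding Phi_def by measurable
  have meas2: "set_borel_measurable lborel A (\<lambda>x. (Phi \<alpha> k x)^2)" if [measurable]: "A \<in> sets borel" for A :: "real set"
    unfolding set_borel_measurable_def by measurable
  have sets_lborel_ok: "{0<..1::real} \<in> sets borel" "{1::real<..} \<in> sets borel" by auto
  have int1: "set_integrable lborel {0<..1} (\<lambda>x. (Phi \<alpha> k x)^2)"
  proof (rule set_integrable_bound[OF _ meas2[OF sets_lborel_ok(1)]])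
    show "set_integrable lborel {0<..1} (\<lambda>x. c1^2 * x powr (-\<alpha>))"
      using powr_int(1)[of "-\<alpha>" 1] assms by simp
    show "AE x in lborel. x \<in> {0<..1} \<longrightarrow> norm ((Phi \<alpha> k x)^2) \<le> norm (c1^2 * x powr (-\<alpha>))"
      using Phi2_bd1 by (auto intro!: AE_I2)
  qed
  have int2: "set_integrable lborel {1<..} (\<lambda>x. (Phi \<alpha> k x)^2)"
  proof (rule set_integrable_bound[OF _ meas2[OF sets_lborel_ok(2)]])
    show "set_integrable lborel {1<..} (\<lambda>x. c1^2 * exp (-(2*K) * x))"
      using exp_int[of "2*K"] K_pos by simp
    show "AE x in lborel. x \<in> {1<..} \<longrightarrow> norm ((Phi \<alpha> k x)^2) \<le> norm (c1^2 * exp (-(2*K) * x))"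
      using Phi2_bd2 by (auto intro!: AE_I2)
  qed
  have intN: "set_integrable lborel {0<..} (\<lambda>x. (Phi \<alpha> k x)^2)"
  proof -
    have "set_integrable lborel ({0<..1} \<union> {1<..}) (\<lambda>x. (Phi \<alpha> k x)^2)"
      by (rule set_integrable_Un[OF int1 int2]) auto
    also have "{0<..1} \<union> {1<..} = {0::real<..}" by auto
    finally show ?thesis .
  qed
  define N where "N = (LBINT \<rho>:{0<..}. (Phi \<alpha> k \<rho>)\<^sup>2)"
  define I0 where "I0 = (\<lambda>x. LBINT \<rho>:{0<..x}. (Phi \<alpha> k \<rho>)\<^sup>2)"
  define I1 where "I1 = (\<lambda>x. LBINT \<rho>:{0<..<x}. F \<alpha> k \<rho> * Phi \<alpha> k \<rho>)"
  have split: "(LBINT \<rho>:{x<..}. (Phi \<alpha> k \<rho>)\<^sup>2) = N - I0 x" if "x > 0" for x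
  proof -
    have "N = (LBINT \<rho>:{0<..x} \<union> {x<..}. (Phi \<alpha> k \<rho>)\<^sup>2)"
      unfolding N_def using that by (intro arg_cong[where f="\<lambda>A. set_lebesgue_integral lborel A _"]) auto
    also have "\<dots> = I0 x + (LBINT \<rho>:{x<..}. (Phi \<alpha> k \<rho>)\<^sup>2)"
      unfolding I0_def
      by (rule set_integral_Un) (use that in \<open>auto intro!: set_integrable_subset[OF intN]\<close>)
    finally show ?thesis by simp
  qed
  have I0_bd: "0 \<le> I0 x \<and> I0 x \<le> c1^2 / (1-\<alpha>) * x powr (1-\<alpha>)" if "x > 0" for x
  proof
    show "0 \<le> I0 x" unfolding I0_def set_lebesgue_integral_def
      by (intro integral_nonneg_AE AE_I2) auto
    have "I0 x \<le> (LBINT \<rho>:{0<..x}. c1^2 * \<rho> powr (-\<alpha>))"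
      unfolding I0_def set_lebesgue_integral_def
    proof (rule integral_mono')
      show "integrable lborel (\<lambda>\<rho>. indicator {0<..x} \<rho> *\<^sub>R (c1^2 * \<rho> powr (-\<alpha>)))"
        using powr_int(1)[of "-\<alpha>" x] assms that unfolding set_integrable_def[symmetric] by simp
    qed (use Phi2_bd1 in \<open>auto simp: indicator_def\<close>)
    also have "\<dots> = c1^2 / (1-\<alpha>) * x powr (1-\<alpha>)"
      using powr_int(2)[of "-\<alpha>" x] assms that by simp
    finally show "I0 x \<le> c1^2 / (1-\<alpha>) * x powr (1-\<alpha>)" .
  qed
  have I1_bd: "0 \<le> I1 x \<and> I1 x \<le> c1*c2*K * x^2" if "x > 0" for x
  proof
    show "0 \<le> I1 x" unfolding I1_def set_lebesgue_integral_def
      using FPhi_bd by (intro integral_nonneg_AE AE_I2) (auto simp: indicator_def)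
    have ccK: "c1*c2*K \<ge> 0" using c1_pos c2_pos K_pos by simp
    have mono: "F \<alpha> k y * Phi \<alpha> k y \<le> c1*c2*K*x" if "0<y" "y<x" for y
      using FPhi_bd[OF that(1)] mult_left_mono[OF less_imp_le[OF that(2)] ccK] by linarith
    have "I1 x \<le> (LBINT \<rho>:{0<..<x}. c1*c2*K * x)"
      unfolding I1_def set_lebesgue_integral_def
    proof (rule integral_mono')
      show "integrable lborel (\<lambda>\<rho>. indicator {0<..<x} \<rho> *\<^sub>R (c1*c2*K * x))"
        unfolding set_integrable_def[symmetric] by (rule set_integrable_mult_right) (simp add: set_integrable_def integrable_indicator_iff emeasure_lborel_Ioo less_imp_le[OF that])
    qed (use mono ccK that in \<open>auto simp: indicator_def\<close>)
    also have "\<dots> = c1*c2*K * x^2"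
      using that by (subst set_integral_const) (auto simp: power2_eq_square measure_def)
    finally show "I1 x \<le> c1*c2*K * x^2" .
  qed
  have coef: "sqrt (2 * \<bar>real_of_int k\<bar> / (pi * (1 + \<alpha>) ^ 3)) = (1/a) * c2 * K"
  proof -
    have "(1/a)*c2*K = sqrt ((1/a)^2 * (2*a/(pi*\<bar>real_of_int k\<bar>)) * K^2)"
    proof -
      have "sqrt ((1/a)^2 * (2*a/(pi*\<bar>real_of_int k\<bar>)) * K^2) = sqrt ((1/a)^2) * sqrt (2*a/(pi*\<bar>real_of_int k\<bar>)) * sqrt (K^2)"
        by (simp only: real_sqrt_mult)
      then show ?thesis using a_pos K_pos by (simp add: c2_def)
    qed
    also have "(1/a)^2 * (2*a/(pi*\<bar>real_of_int k\<bar>)) * K^2 = 2 * \<bar>real_of_int k\<bar> / (pi * (1 + \<alpha>) ^ 3)"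
    proof -
      have "(1/a)^2 * (2*a/(pi*m)) * (m/a)^2 = 2*m/(pi*a^3)" if "m > 0" for m
        using a_pos that by (simp add: field_simps power2_eq_square power3_eq_cube)
      from this[OF kpos] show ?thesis by (simp add: K_def a_def)
    qed
    finally show ?thesis by simp
  qed
  have ev: "eventually (\<lambda>x. Psi \<alpha> k x
            - sqrt (2 * \<bar>real_of_int k\<bar> / (pi * (1 + \<alpha>) ^ 3))
              * (LBINT \<rho>:{0<..}. (Phi \<alpha> k \<rho>)\<^sup>2) * x powr (1 + \<alpha>/2)
       = ((1/a) * (Phi \<alpha> k x * I1 x) - (1/a) * (F \<alpha> k x * I0 x))
         + ((1/a)*N*c2) * (x powr (-\<alpha>/2) * (sinh (K * x powr (1+\<alpha>)) - K * x powr (1+\<alpha>)))) (at_right 0)"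
  proof (rule eventually_mono[OF eventually_at_right_less])
    fix x :: real assume x: "0 < x"
    have p: "x powr (1 + \<alpha>/2) = x powr (-\<alpha>/2) * x powr (1+\<alpha>)"
      by (simp add: add.commute flip: powr_add)
    have "Psi \<alpha> k x = (1/a) * (Phi \<alpha> k x * I1 x + F \<alpha> k x * (N - I0 x))"
      unfolding Psi_def I1_def split[OF x] a_def by simp
    then show "Psi \<alpha> k x
            - sqrt (2 * \<bar>real_of_int k\<bar> / (pi * (1 + \<alpha>) ^ 3))
              * (LBINT \<rho>:{0<..}. (Phi \<alpha> k \<rho>)\<^sup>2) * x powr (1 + \<alpha>/2)
       = ((1/a) * (Phi \<alpha> k x * I1 x) - (1/a) * (F \<alpha> k x * I0 x))
         + ((1/a)*N*c2) * (x powr (-\<alpha>/2) * (sinh (K * x powr (1+\<alpha>)) - K * x powr (1+\<alpha>)))"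
      unfolding coef N_def[symmetric] p F_eq a_def by (simp add: algebra_simps)
  qed
  have o1: "(\<lambda>x. Phi \<alpha> k x * I1 x) \<in> o[at_right 0](\<lambda>x. x powr (3/2))"
  proof (rule landau_o.big_small_trans[OF _ asy2[of \<alpha> K]])
    show "(\<lambda>x. Phi \<alpha> k x * I1 x) \<in> O[at_right 0](\<lambda>x. x powr (-\<alpha>/2) * exp (-K * x powr (1+\<alpha>)) * x^2)"
    proof (rule bigoI[where c = "c1 * (c1*c2*K)"], rule eventually_mono[OF eventually_at_right_less])
      fix x :: real assume x: "0 < x"
      have ph: "Phi \<alpha> k x = c1 * (x powr (-\<alpha>/2) * exp (-K * x powr (1+\<alpha>)))"
        unfolding Phi_eq a_def by simp
      have "Phi \<alpha> k x * I1 x \<le> c1 * (x powr (-\<alpha>/2) * exp (-K * x powr (1+\<alpha>))) * (c1*c2*K * x^2)"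
        unfolding ph using I1_bd[OF x] c1_pos by (intro mult_left_mono) auto
      moreover have "0 \<le> Phi \<alpha> k x * I1 x" unfolding ph using I1_bd[OF x] c1_pos by simp
      ultimately show "norm (Phi \<alpha> k x * I1 x) \<le> c1 * (c1*c2*K) * norm (x powr (-\<alpha>/2) * exp (-K * x powr (1+\<alpha>)) * x^2)"
        by (simp add: abs_mult algebra_simps)
    qed
  qed (use assms K_pos in auto)
  have o2: "(\<lambda>x. F \<alpha> k x * I0 x) \<in> o[at_right 0](\<lambda>x. x powr (3/2))"
  proof (rule landau_o.big_small_trans[OF _ asy3[of \<alpha> K]])
    show "(\<lambda>x. F \<alpha> k x * I0 x) \<in> O[at_right 0](\<lambda>x. x powr (-\<alpha>/2) * sinh (K * x powr (1+\<alpha>)) * x powr (1-\<alpha>))"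
    proof (rule bigoI[where c = "c2 * (c1^2/(1-\<alpha>))"], rule eventually_mono[OF eventually_at_right_less])
      fix x :: real assume x: "0 < x"
      have sh: "sinh (K * x powr (1+\<alpha>)) \<ge> 0" using K_pos by simp
      have ph: "F \<alpha> k x = c2 * (x powr (-\<alpha>/2) * sinh (K * x powr (1+\<alpha>)))"
        unfolding F_eq a_def by simp
      have "F \<alpha> k x * I0 x \<le> c2 * (x powr (-\<alpha>/2) * sinh (K * x powr (1+\<alpha>))) * (c1^2/(1-\<alpha>) * x powr (1-\<alpha>))"
        unfolding ph using I0_bd[OF x] c2_pos sh by (intro mult_left_mono) auto
      moreover have "0 \<le> F \<alpha> k x * I0 x" unfolding ph using I0_bd[OF x] c2_pos sh by simp
      ultimately show "norm (F \<alpha> k x * I0 x) \<le> c2 * (c1^2/(1-\<alpha>)) * norm (x powr (-\<alpha>/2) * sinh (K * x powr (1+\<alpha>)) * x powr (1-\<alpha>))"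
        using sh assms by (simp add: abs_mult algebra_simps)
    qed
  qed (use assms K_pos in auto)
  have o3: "(\<lambda>x. x powr (-\<alpha>/2) * (sinh (K * x powr (1+\<alpha>)) - K * x powr (1+\<alpha>))) \<in> o[at_right 0](\<lambda>x. x powr (3/2))"
    using asy1[of \<alpha> K] assms K_pos by simp
  have "(\<lambda>x. ((1/a) * (Phi \<alpha> k x * I1 x) - (1/a) * (F \<alpha> k x * I0 x))
         + ((1/a)*N*c2) * (x powr (-\<alpha>/2) * (sinh (K * x powr (1+\<alpha>)) - K * x powr (1+\<alpha>)))) \<in> o[at_right 0](\<lambda>x. x powr (3/2))"
    by (intro sum_in_smallo) (simp_all only: cmult_in_smallo_iff o1 o2 o3 simp_thms)
  then show ?thesis using landau_o.small.in_cong[OF ev] by simp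
qed
end
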